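(* Let $W\in\mathbb{R}^{a\times b}$ with columns $w_1,\dots,w_b$, and let $\sigma:\mathbb{R}\to\mathbb{R}$ be positive-homogeneous ($\sigma(\alpha t)=\alpha\sigma(t)$ for all $\alpha\ge0$) and not identically zero. Let $z\sim\mathcal N(0,I_a)$ and define $s_j=\mathbb{E}_z[|\sigma(\langle z,w_j\rangle)|]\big/\big(\frac1b\sum_{k=1}^b\mathbb{E}_z[|\sigma(\langle z,w_k\rangle)|]\big)$. Fix $\tau\in(0,1)$. If $\mathrm{DfI}(W)\le\big(\frac{1-\tau^2}{1+\tau^2}\big)^2$, then $s_j\ge\tau$ for all $j$.
   Context: $\mathrm{DfI}(W)=\|W^\top W-I\|_F^2$ (Deviation from Isometry), with $\|\cdot\|_F$ the Frobenius norm. $s_j$ is the activity score of neuron $j$; a neuron with $s_j<\tau$ is called $\tau$-dormant. *)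

theory Defs
  imports "HOL-Probability.Probability"
begin

definition std_gaussian :: "(real ^ 'n::finite) measure" where
  "std_gaussian = density lborel
     (\<lambda>z. ennreal ((2 * pi) powr (- real CARD('n) / 2) * exp (- (norm z)\<^sup>2 / 2)))"

definition pos_homogeneous :: "(real \<Rightarrow> real) \<Rightarrow> bool" where
  "pos_homogeneous \<sigma> \<longleftrightarrow> (\<forall>\<alpha> t. \<alpha> \<ge> 0 \<longrightarrow> \<sigma> (\<alpha> * t) = \<alpha> * \<sigma> t)"

text \<open>Deviation from isometry: squared Frobenius norm of W^T W - I.  For matrices
  of type real^'n^'m the library norm is the Euclidean norm of all entries,
  i.e. the Frobenius norm.\<close>
definition DfI :: "real ^ 'b::finite ^ 'a::finite \<Rightarrow> real" where
  "DfI W = (norm (transpose W ** W - mat 1))\<^sup>2"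

definition mean_abs_act :: "(real \<Rightarrow> real) \<Rightarrow> real ^ 'a::finite \<Rightarrow> real" where
  "mean_abs_act \<sigma> w = (\<integral>z. \<bar>\<sigma> (z \<bullet> w)\<bar> \<partial>std_gaussian)"

definition activity_score ::
  "(real \<Rightarrow> real) \<Rightarrow> real ^ 'b::finite ^ 'a::finite \<Rightarrow> 'b \<Rightarrow> real" where
  "activity_score \<sigma> W j =
     mean_abs_act \<sigma> (column j W) /
       ((1 / real CARD('b)) * (\<Sum>k\<in>UNIV. mean_abs_act \<sigma> (column k W)))"

end

theory Submission
  imports Defs
begin


abbreviation "NN \<equiv> density lborel (\<lambda>x. ennreal (std_normal_density x))"

lemma PiM_density_normal:
  assumes I: "finite I"
  shows "density (PiM I (\<lambda>_. lborel)) (\<lambda>f. \<Prod>i\<in>I. ennreal (std_normal_density (f i))) = PiM I (\<lambda>_. NN)"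
proof -
  interpret N: prob_space NN using prob_space_normal_density[of 1 0] by simp
  interpret P: product_sigma_finite "\<lambda>_. NN" by standard
  interpret L: product_sigma_finite "\<lambda>_. lborel :: real measure" by standard
  show ?thesis
  proof (rule P.PiM_eqI[OF I])
    show "sets (density (Pi\<^sub>M I (\<lambda>_. lborel)) (\<lambda>f. \<Prod>i\<in>I. ennreal (std_normal_density (f i)))) = sets (Pi\<^sub>M I (\<lambda>_. NN))"
      unfolding sets_density by (rule sets_PiM_cong) auto
  next
    fix A assume A: "\<And>i. i \<in> I \<Longrightarrow> A i \<in> sets NN"
    have "emeasure (density (Pi\<^sub>M I (\<lambda>_. lborel)) (\<lambda>f. \<Prod>i\<in>I. ennreal (std_normal_density (f i)))) (Pi\<^sub>E I A)
       = (\<integral>\<^sup>+ f. (\<Prod>i\<in>I. ennreal (std_normal_density (f i))) * indicator (Pi\<^sub>E I A) f \<partial>Pi\<^sub>M I (\<lambda>_. lborel))"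
      using A by (subst emeasure_density) (auto intro!: sets_PiM_I_finite I)
    also have "\<dots> = (\<integral>\<^sup>+ f. (\<Prod>i\<in>I. ennreal (std_normal_density (f i)) * indicator (A i) (f i)) \<partial>Pi\<^sub>M I (\<lambda>_. lborel))"
      by (intro nn_integral_cong) (use I in \<open>auto simp: space_PiM indicator_def prod.distrib PiE_iff\<close>)
    also have "\<dots> = (\<Prod>i\<in>I. \<integral>\<^sup>+ x. ennreal (std_normal_density x) * indicator (A i) x \<partial>lborel)"
      using A by (intro L.product_nn_integral_prod I) auto
    also have "\<dots> = (\<Prod>i\<in>I. emeasure NN (A i))"
      using A by (intro prod.cong refl) (auto simp: emeasure_density)
    finally show "emeasure (density (Pi\<^sub>M I (\<lambda>_. lborel)) (\<lambda>f. \<Prod>i\<in>I. ennreal (std_normal_density (f i)))) (Pi\<^sub>E I A) = (\<Prod>i\<in>I. emeasure NN (A i))" .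
  qed
qed



lemma norm_sq_basis: "(norm (z::'v::euclidean_space))\<^sup>2 = (\<Sum>b\<in>Basis. (z \<bullet> b)\<^sup>2)"
proof -
  have "(norm z)\<^sup>2 = z \<bullet> z" by (simp add: power2_norm_eq_inner)
  also have "\<dots> = (\<Sum>b\<in>Basis. (z \<bullet> b) * (z \<bullet> b))" by (rule euclidean_inner)
  finally show ?thesis by (simp add: power2_eq_square)
qed

lemma gd_prod:
  "(2 * pi) powr (- real DIM('v) / 2) * exp (- (norm (z::'v::euclidean_space))\<^sup>2 / 2)
   = (\<Prod>b\<in>Basis. std_normal_density (z \<bullet> b))"
proof -
  have "(\<Prod>b\<in>(Basis::'v set). std_normal_density (z \<bullet> b))
     = (\<Prod>b\<in>(Basis::'v set). 1 / sqrt (2*pi)) * (\<Prod>b\<in>(Basis::'v set). exp (- (z \<bullet> b)\<^sup>2 / 2))"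
    unfolding std_normal_density_def prod.distrib ..
  also have "(\<Prod>b\<in>(Basis::'v set). 1 / sqrt (2*pi)) = (2 * pi) powr (- real DIM('v) / 2)"
  proof -
    have "(\<Prod>b\<in>(Basis::'v set). 1 / sqrt (2*pi)) = ((2*pi) powr (-1/2)) ^ DIM('v)"
      by (simp add: sqrt_def root_powr_inverse powr_minus_divide powr_divide)
    also have "\<dots> = (2 * pi) powr (- real DIM('v) / 2)"
      by (simp add: powr_realpow[symmetric] powr_powr)
    finally show ?thesis .
  qed
  also have "(\<Prod>b\<in>(Basis::'v set). exp (- (z \<bullet> b)\<^sup>2 / 2)) = exp (- (norm z)\<^sup>2 / 2)"
    by (simp add: exp_sum[symmetric] norm_sq_basis sum_negf sum_divide_distrib)
  finally show ?thesis by simp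
qed

definition TT :: "('v::euclidean_space \<Rightarrow> real) \<Rightarrow> 'v" where
  "TT f = (\<Sum>b\<in>Basis. f b *\<^sub>R b)"

lemma TT_inner: "b \<in> Basis \<Longrightarrow> TT f \<bullet> b = f b"
  unfolding TT_def by (simp add: inner_sum_left inner_Basis if_distrib cong: if_cong)

lemma gauss_eq:
  "density lborel (\<lambda>z::'v::euclidean_space. ennreal ((2 * pi) powr (- real DIM('v) / 2) * exp (- (norm z)\<^sup>2 / 2)))
   = distr (PiM Basis (\<lambda>_. NN)) borel TT"
proof -
  have Tm[measurable]: "TT \<in> measurable (PiM Basis (\<lambda>_. lborel)) (borel :: 'v measure)"
    unfolding TT_def[abs_def] by measurable
  have "density lborel (\<lambda>z::'v. ennreal ((2 * pi) powr (- real DIM('v) / 2) * exp (- (norm z)\<^sup>2 / 2)))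
     = density (distr (PiM Basis (\<lambda>_. lborel)) borel TT) (\<lambda>z::'v. ennreal ((2 * pi) powr (- real DIM('v) / 2) * exp (- (norm z)\<^sup>2 / 2)))"
    by (subst lborel_eq[where 'a='v]) (simp add: TT_def[abs_def])
  also have "\<dots> = distr (density (PiM Basis (\<lambda>_. lborel)) (\<lambda>f. ennreal ((2 * pi) powr (- real DIM('v) / 2) * exp (- (norm (TT f :: 'v))\<^sup>2 / 2)))) borel TT"
    by (rule density_distr) auto
  also have "density (PiM Basis (\<lambda>_. lborel)) (\<lambda>f. ennreal ((2 * pi) powr (- real DIM('v) / 2) * exp (- (norm (TT f :: 'v))\<^sup>2 / 2)))
     = density (PiM Basis (\<lambda>_. lborel)) (\<lambda>f. \<Prod>b\<in>(Basis::'v set). ennreal (std_normal_density (f b)))"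
  proof (intro density_cong AE_I2)
    fix f :: "'v \<Rightarrow> real" assume "f \<in> space (PiM (Basis::'v set) (\<lambda>_. lborel :: real measure))"
    have "(2 * pi) powr (- real DIM('v) / 2) * exp (- (norm (TT f :: 'v))\<^sup>2 / 2)
      = (\<Prod>b\<in>(Basis::'v set). std_normal_density (f b))"
      unfolding gd_prod by (simp add: TT_inner)
    then show "ennreal ((2 * pi) powr (- real DIM('v) / 2) * exp (- (norm (TT f :: 'v))\<^sup>2 / 2))
      = (\<Prod>b\<in>(Basis::'v set). ennreal (std_normal_density (f b)))"
      by (simp add: prod_ennreal)
  qed auto
  also have "\<dots> = PiM Basis (\<lambda>_. NN)"
    by (rule PiM_density_normal) simp
  finally show ?thesis .
qed



lemma prob_NN: "prob_space NN"
  using prob_space_normal_density[of 1 0] by simp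

lemma prob_P: "prob_space (PiM I (\<lambda>_. NN))"
  by (intro prob_space_PiM prob_NN)

lemma distr_coord: 
  assumes "i \<in> I"
  shows "distr (PiM I (\<lambda>_. NN)) borel (\<lambda>f. f i) = NN"
proof -
  have "distr (PiM I (\<lambda>_. NN)) borel (\<lambda>f. f i) = distr (PiM I (\<lambda>_. NN)) NN (\<lambda>f. f i)"
    by (rule distr_cong) auto
  also have "\<dots> = NN"
    by (rule distr_PiM_component[OF prob_NN assms])
  finally show ?thesis .
qed

lemma coord_indep:
  assumes "I \<noteq> {}"
  shows "prob_space.indep_vars (PiM I (\<lambda>_. NN)) (\<lambda>_. borel) (\<lambda>b f. f b) I"
proof -
  interpret P: prob_space "PiM I (\<lambda>_. NN)" by (rule prob_P)
  have "distr (PiM I (\<lambda>_. NN)) (PiM I (\<lambda>_. borel)) (\<lambda>x. \<lambda>i\<in>I. x i) 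
       = distr (PiM I (\<lambda>_. NN)) (PiM I (\<lambda>_. NN)) (\<lambda>x. x)"
    by (rule distr_cong) (auto simp: space_PiM intro!: sets_PiM_cong)
  also have "\<dots> = PiM I (\<lambda>_. NN)" by simp
  also have "\<dots> = PiM I (\<lambda>i. distr (PiM I (\<lambda>_. NN)) borel (\<lambda>f. f i))"
    by (intro PiM_cong refl) (simp add: distr_coord)
  finally show ?thesis
    by (subst P.indep_vars_iff_distr_eq_PiM'[OF assms]) (auto simp: measurable_component_singleton)
qed



lemma TT_inner_w: "TT f \<bullet> w = (\<Sum>b\<in>Basis. (b \<bullet> w) * f b)"
  unfolding TT_def by (simp add: inner_sum_left mult.commute)

lemma TT_distributed:
  fixes w :: "'v::euclidean_space"
  assumes w: "w \<noteq> 0"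
  shows "distributed (PiM (Basis::'v set) (\<lambda>_. NN)) lborel (\<lambda>f. TT f \<bullet> w) (normal_density 0 (norm w))"
proof -
  interpret P: prob_space "PiM (Basis::'v set) (\<lambda>_. NN)" by (rule prob_P)
  define I where "I = {b\<in>(Basis::'v set). b \<bullet> w \<noteq> 0}"
  have fin: "finite I" unfolding I_def by auto
  have ne: "I \<noteq> {}"
  proof
    assume "I = {}"
    then have "\<forall>b\<in>(Basis::'v set). w \<bullet> b = 0" unfolding I_def by (auto simp: inner_commute)
    then have "w = 0" by (simp add: euclidean_all_zero_iff)
    with w show False by simp
  qed
  have IB: "I \<subseteq> Basis" unfolding I_def by auto
  have ind0: "P.indep_vars (\<lambda>_. borel) (\<lambda>b f. f b) I"
    by (rule P.indep_vars_subset[OF coord_indep IB]) auto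
  have ind: "P.indep_vars (\<lambda>_. borel) (\<lambda>b f. (b \<bullet> w) * f b) I"
    using P.indep_vars_compose2[OF ind0, of "\<lambda>b x. (b \<bullet> w) * x" "\<lambda>_. borel"] by simp
  have dstd: "distributed (PiM (Basis::'v set) (\<lambda>_. NN)) lborel (\<lambda>f. f b) std_normal_density"
    if "b \<in> Basis" for b :: 'v
  proof -
    have "distr (PiM (Basis::'v set) (\<lambda>_. NN)) lborel (\<lambda>f. f b) = distr (PiM (Basis::'v set) (\<lambda>_. NN)) borel (\<lambda>f. f b)"
      by (rule distr_cong) auto
    also have "\<dots> = NN" using that by (rule distr_coord)
    finally show ?thesis
      unfolding distributed_def using that by (auto simp: measurable_component_singleton)
  qed
  have dI: "distributed (PiM (Basis::'v set) (\<lambda>_. NN)) lborel (\<lambda>f. (b \<bullet> w) * f b) (normal_density 0 \<bar>b \<bullet> w\<bar>)"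
    if "b \<in> I" for b
  proof -
    have "b \<in> Basis" "b \<bullet> w \<noteq> 0" using that unfolding I_def by auto
    from P.normal_density_affine[OF dstd[OF this(1)] _ this(2), of 0] show ?thesis by simp
  qed
  have "distributed (PiM (Basis::'v set) (\<lambda>_. NN)) lborel (\<lambda>f. \<Sum>b\<in>I. (b \<bullet> w) * f b)
          (normal_density (\<Sum>b\<in>I. 0) (sqrt (\<Sum>b\<in>I. (\<bar>b \<bullet> w\<bar>)\<^sup>2)))"
    by (rule P.sum_indep_normal[OF fin ne ind _ dI]) (auto simp: I_def)
  moreover have "(\<Sum>b\<in>I. (\<bar>b \<bullet> w\<bar>)\<^sup>2) = (norm w)\<^sup>2"
  proof -
    have "(\<Sum>b\<in>I. (\<bar>b \<bullet> w\<bar>)\<^sup>2) = (\<Sum>b\<in>I. (w \<bullet> b)\<^sup>2)"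
      by (simp add: inner_commute)
    also have "\<dots> = (\<Sum>b\<in>(Basis::'v set). (w \<bullet> b)\<^sup>2)"
      by (rule sum.mono_neutral_left) (auto simp: I_def inner_commute)
    finally show ?thesis by (simp add: norm_sq_basis)
  qed
  moreover have "(\<lambda>f. \<Sum>b\<in>I. (b \<bullet> w) * f b) = (\<lambda>f. TT f \<bullet> w)"
  proof
    fix f :: "'v \<Rightarrow> real"
    show "(\<Sum>b\<in>I. (b \<bullet> w) * f b) = TT f \<bullet> w"
      unfolding TT_inner_w by (rule sum.mono_neutral_left) (auto simp: I_def)
  qed
  ultimately show ?thesis by simp
qed



lemma ph_form:
  assumes "pos_homogeneous \<sigma>"
  shows "\<sigma> x = (if 0 \<le> x then x * \<sigma> 1 else (- x) * \<sigma> (-1))"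
proof (cases "0 \<le> x")
  case True
  then show ?thesis using assms[unfolded pos_homogeneous_def, rule_format, of x 1] by simp
next
  case False
  then show ?thesis using assms[unfolded pos_homogeneous_def, rule_format, of "-x" "-1"] by simp
qed

lemma ph_meas:
  assumes "pos_homogeneous \<sigma>"
  shows "\<sigma> \<in> borel_measurable borel"
proof -
  have "\<sigma> = (\<lambda>x. if 0 \<le> x then x * \<sigma> 1 else (- x) * \<sigma> (-1))"
    using ph_form[OF assms] by blast
  also have "\<dots> \<in> borel_measurable borel" by measurable
  finally show ?thesis .
qed

lemma nd_scale:
  assumes "0 < s"
  shows "normal_density 0 s (s * y) = std_normal_density y / s"
  using assms by (simp add: normal_density_def real_sqrt_mult power_mult_distrib field_simps)

definition KK :: "(real \<Rightarrow> real) \<Rightarrow> real" where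
  "KK \<sigma> = (\<integral>y. std_normal_density y * \<bar>\<sigma> y\<bar> \<partial>lborel)"

lemma scale_integral:
  assumes ph: "pos_homogeneous \<sigma>" and s: "0 < s"
  shows "(\<integral>x. normal_density 0 s x * \<bar>\<sigma> x\<bar> \<partial>lborel) = s * KK \<sigma>"
proof -
  have "(\<integral>x. normal_density 0 s x * \<bar>\<sigma> x\<bar> \<partial>lborel)
     = \<bar>s\<bar> *\<^sub>R (\<integral>y. normal_density 0 s (0 + s * y) * \<bar>\<sigma> (0 + s * y)\<bar> \<partial>lborel)"
    by (rule lborel_integral_real_affine) (use s in auto)
  also have "(\<lambda>y. normal_density 0 s (0 + s * y) * \<bar>\<sigma> (0 + s * y)\<bar>) = (\<lambda>y. std_normal_density y * \<bar>\<sigma> y\<bar>)"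
  proof
    fix y
    have "\<sigma> (s * y) = s * \<sigma> y" using ph s unfolding pos_homogeneous_def by simp
    then show "normal_density 0 s (0 + s * y) * \<bar>\<sigma> (0 + s * y)\<bar> = std_normal_density y * \<bar>\<sigma> y\<bar>"
      using s by (simp add: nd_scale abs_mult)
  qed
  finally show ?thesis using s by (simp add: KK_def)
qed

lemma KK_integrable:
  assumes ph: "pos_homogeneous \<sigma>"
  shows "integrable lborel (\<lambda>y. std_normal_density y * \<bar>\<sigma> y\<bar>)"
proof (rule Bochner_Integration.integrable_bound)
  show "integrable lborel (\<lambda>y. (\<bar>\<sigma> 1\<bar> + \<bar>\<sigma> (-1)\<bar>) * (std_normal_density y * \<bar>y\<bar> ^ 1))"
    by (intro integrable_mult_right integrable_std_normal_moment_abs)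
  show "(\<lambda>y. std_normal_density y * \<bar>\<sigma> y\<bar>) \<in> borel_measurable lborel"
    using ph_meas[OF ph] by measurable
  show "AE y in lborel. norm (std_normal_density y * \<bar>\<sigma> y\<bar>) \<le> norm ((\<bar>\<sigma> 1\<bar> + \<bar>\<sigma> (-1)\<bar>) * (std_normal_density y * \<bar>y\<bar> ^ 1))"
  proof (intro AE_I2)
    fix y :: real
    have "\<bar>\<sigma> y\<bar> \<le> (\<bar>\<sigma> 1\<bar> + \<bar>\<sigma> (-1)\<bar>) * \<bar>y\<bar>"
      by (subst ph_form[OF ph]) (auto simp: abs_mult algebra_simps intro: mult_nonpos_nonneg)
    then show "norm (std_normal_density y * \<bar>\<sigma> y\<bar>) \<le> norm ((\<bar>\<sigma> 1\<bar> + \<bar>\<sigma> (-1)\<bar>) * (std_normal_density y * \<bar>y\<bar> ^ 1))"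
      by (simp add: abs_mult) (metis mult_left_mono normal_density_nonneg mult.left_commute)
  qed
qed

lemma KK_pos:
  assumes ph: "pos_homogeneous \<sigma>" and nz: "\<exists>t. \<sigma> t \<noteq> 0"
  shows "0 < KK \<sigma>"
proof -
  obtain t where t: "\<sigma> t \<noteq> 0" using nz by blast
  define c :: real where "c = (if 0 < t then 1 else -1)"
  have c0: "c \<noteq> 0" unfolding c_def by simp
  have sc: "\<sigma> c \<noteq> 0"
  proof
    assume "\<sigma> c = 0"
    have "t = \<bar>t\<bar> * c" unfolding c_def by auto
    then have "\<sigma> t = \<bar>t\<bar> * \<sigma> c" using ph unfolding pos_homogeneous_def by (metis abs_ge_zero)
    with \<open>\<sigma> c = 0\<close> t show False by simp
  qed
  have meas[measurable]: "\<sigma> \<in> borel_measurable borel" by (rule ph_meas[OF ph])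
  have nn: "AE y in lborel. 0 \<le> std_normal_density y * \<bar>\<sigma> y\<bar>" by simp
  have ge: "0 \<le> KK \<sigma>" unfolding KK_def by (rule integral_nonneg_AE[OF nn])
  have "KK \<sigma> \<noteq> 0"
  proof
    assume "KK \<sigma> = 0"
    then have "AE y in lborel. std_normal_density y * \<bar>\<sigma> y\<bar> = 0"
      unfolding KK_def using integral_nonneg_eq_0_iff_AE[OF KK_integrable[OF ph] nn] by simp
    then have "AE y in lborel. \<sigma> y = 0"
    proof (rule AE_mp, intro AE_I2 impI)
      fix y :: real assume "std_normal_density y * \<bar>\<sigma> y\<bar> = 0"
      moreover have "0 < std_normal_density y" by (simp add: normal_density_pos)
      ultimately show "\<sigma> y = 0" by simp
    qed
    then have aff: "AE x in lborel. \<sigma> (c * x) = 0"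
      using AE_borel_affine[OF c0, where P="\<lambda>y. \<sigma> y = 0" and t=0] by simp
    have imp: "x \<le> 0" if "\<sigma> (c * x) = 0" for x :: real
    proof (rule ccontr)
      assume "\<not> x \<le> 0"
      then have "\<sigma> (x * c) = x * \<sigma> c" using ph unfolding pos_homogeneous_def by simp
      with that \<open>\<not> x \<le> 0\<close> sc show False by (simp add: mult.commute)
    qed
    have "AE x in lborel. \<sigma> (c * x) = 0 \<longrightarrow> x \<le> 0" using imp by blast
    with aff have "AE x in lborel. (x::real) \<le> 0" by (rule AE_mp)
    then have "emeasure lborel {x::real \<in> space lborel. \<not> x \<le> 0} = 0"
      by (subst (asm) AE_iff_measurable[OF _ refl]) auto
    moreover have "emeasure lborel {0<..<1::real} \<le> emeasure lborel {x::real \<in> space lborel. \<not> x \<le> 0}"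
      by (rule emeasure_mono) auto
    ultimately show False by simp
  qed
  with ge show ?thesis by simp
qed



lemma std_gaussian_eq:
  "(std_gaussian :: (real ^ 'n::finite) measure) = distr (PiM (Basis :: (real^'n) set) (\<lambda>_. NN)) borel TT"
proof -
  have "(std_gaussian :: (real ^ 'n::finite) measure) = density lborel (\<lambda>z::real^'n. ennreal ((2 * pi) powr (- real DIM(real^'n) / 2) * exp (- (norm z)\<^sup>2 / 2)))"
    by (simp add: std_gaussian_def)
  also have "\<dots> = distr (PiM (Basis :: (real^'n) set) (\<lambda>_. NN)) borel TT"
    by (rule gauss_eq)
  finally show ?thesis .
qed

lemma mean_eq:
  fixes w :: "real ^ 'n::finite"
  assumes ph: "pos_homogeneous \<sigma>" and w: "w \<noteq> 0"
  shows "mean_abs_act \<sigma> w = norm w * KK \<sigma>"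
proof -
  have sm[measurable]: "\<sigma> \<in> borel_measurable borel" by (rule ph_meas[OF ph])
  have Tm: "TT \<in> measurable (PiM (Basis :: (real^'n) set) (\<lambda>_. NN)) (borel :: (real^'n) measure)"
  proof -
    have "TT \<in> measurable (PiM (Basis :: (real^'n) set) (\<lambda>_. lborel)) (borel :: (real^'n) measure)"
      unfolding TT_def[abs_def] by measurable
    moreover have "sets (PiM (Basis :: (real^'n) set) (\<lambda>_. lborel)) = sets (PiM (Basis :: (real^'n) set) (\<lambda>_. NN))"
      by (rule sets_PiM_cong) auto
    ultimately show ?thesis using measurable_cong_sets by blast
  qed
  have "mean_abs_act \<sigma> w = (\<integral>z. \<bar>\<sigma> (z \<bullet> w)\<bar> \<partial>distr (PiM (Basis :: (real^'n) set) (\<lambda>_. NN)) borel TT)"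
    unfolding mean_abs_act_def std_gaussian_eq ..
  also have "\<dots> = (\<integral>f. \<bar>\<sigma> (TT f \<bullet> w)\<bar> \<partial>PiM (Basis :: (real^'n) set) (\<lambda>_. NN))"
    by (rule integral_distr[OF Tm]) measurable
  also have "\<dots> = (\<integral>x. normal_density 0 (norm w) x * \<bar>\<sigma> x\<bar> \<partial>lborel)"
    by (rule distributed_integral[OF TT_distributed[OF w], symmetric]) auto
  also have "\<dots> = norm w * KK \<sigma>"
    by (rule scale_integral[OF ph]) (use w in simp)
  finally show ?thesis .
qed

lemma diag_le:
  fixes M :: "real ^ 'n::finite ^ 'm::finite"
  shows "\<bar>M $ i $ j\<bar> \<le> norm M"
proof -
  have "\<bar>M $ i $ j\<bar> \<le> norm (M $ i)" by (rule component_le_norm_cart)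
  also have "\<dots> \<le> norm M" by (rule Finite_Cartesian_Product.norm_nth_le)
  finally show ?thesis .
qed

lemma gram_diag:
  fixes W :: "real ^ 'b::finite ^ 'a::finite"
  shows "(transpose W ** W - mat 1) $ j $ j = (norm (column j W))\<^sup>2 - 1"
  by (simp add: matrix_matrix_mult_def transpose_def column_def mat_def power2_norm_eq_inner
      inner_vec_def)



theorem corollary2:
  fixes W :: "real ^ 'b::finite ^ 'a::finite"
    and \<sigma> :: "real \<Rightarrow> real"
    and \<tau> :: real
  assumes "pos_homogeneous \<sigma>"
    and "\<exists>t. \<sigma> t \<noteq> 0"
    and "0 < \<tau>" and "\<tau> < 1"
    and "DfI W \<le> ((1 - \<tau>\<^sup>2) / (1 + \<tau>\<^sup>2))\<^sup>2"
  shows "\<forall>j. activity_score \<sigma> W j \<ge> \<tau>"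
proof
  fix j :: 'b
  note ph = assms(1)
  define \<delta> where "\<delta> = (1 - \<tau>\<^sup>2) / (1 + \<tau>\<^sup>2)"
  define c where "c k = norm (column k W)" for k
  define M where "M = transpose W ** W - mat 1"
  have t2: "\<tau>\<^sup>2 < 1" using assms(3,4) by (simp add: power_less_one_iff)
  have t0: "0 < \<tau>\<^sup>2" using assms(3) by simp
  have p1: "0 < 1 + \<tau>\<^sup>2" using t0 by linarith
  have d0: "0 \<le> \<delta>" "\<delta> < 1" unfolding \<delta>_def using t2 t0 p1
    by (simp_all add: divide_less_eq)
  have key: "\<tau>\<^sup>2 * (1 + \<delta>) = 1 - \<delta>"
  proof -
    have ne: "1 + \<tau>\<^sup>2 \<noteq> 0" using p1 by linarith
    show ?thesis unfolding \<delta>_def using ne by (simp add: field_simps)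
  qed
  have "(norm M)\<^sup>2 \<le> \<delta>\<^sup>2" using assms(5) unfolding DfI_def M_def \<delta>_def .
  then have nM: "norm M \<le> \<delta>" using d0 by (simp add: power2_le_iff_abs_le)
  have cb: "1 - \<delta> \<le> (c k)\<^sup>2 \<and> (c k)\<^sup>2 \<le> 1 + \<delta>" for k
  proof -
    have "\<bar>(c k)\<^sup>2 - 1\<bar> \<le> \<delta>"
      using diag_le[of M k k] gram_diag[of W k] nM unfolding M_def c_def by simp
    then show ?thesis by auto
  qed
  have cpos: "0 < c k" for k
  proof -
    have "0 < (c k)\<^sup>2" using cb[of k] d0 by linarith
    then show ?thesis unfolding c_def by simp
  qed
  have cmp: "\<tau> * c k \<le> c j" for k
  proof (rule power2_le_imp_le)
    have "(\<tau> * c k)\<^sup>2 = \<tau>\<^sup>2 * (c k)\<^sup>2" by (simp add: power_mult_distrib)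
    also have "\<dots> \<le> \<tau>\<^sup>2 * (1 + \<delta>)" using cb[of k] by (intro mult_left_mono) auto
    also have "\<dots> \<le> (c j)\<^sup>2" using key cb[of j] by simp
    finally show "(\<tau> * c k)\<^sup>2 \<le> (c j)\<^sup>2" .
    show "0 \<le> c j" using cpos[of j] by simp
  qed
  have K: "0 < KK \<sigma>" by (rule KK_pos[OF ph assms(2)])
  have mk: "mean_abs_act \<sigma> (column k W) = c k * KK \<sigma>" for k
  proof -
    have "column k W \<noteq> 0" using cpos[of k] unfolding c_def by auto
    then show ?thesis unfolding c_def by (rule mean_eq[OF ph])
  qed
  define S where "S = (\<Sum>k\<in>UNIV. c k)"
  have Spos: "0 < S" unfolding S_def by (intro sum_pos cpos) auto
  have tS: "\<tau> * S \<le> real CARD('b) * c j"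
  proof -
    have "\<tau> * S = (\<Sum>k\<in>UNIV. \<tau> * c k)" unfolding S_def by (simp add: sum_distrib_left)
    also have "\<dots> \<le> (\<Sum>k\<in>(UNIV::'b set). c j)" by (intro sum_mono cmp)
    also have "\<dots> = real CARD('b) * c j" by simp
    finally show ?thesis .
  qed
  have "activity_score \<sigma> W j = c j * KK \<sigma> / ((1 / real CARD('b)) * (S * KK \<sigma>))"
    unfolding activity_score_def mk S_def by (simp add: sum_distrib_right)
  also have "\<dots> = real CARD('b) * c j / S"
    using K Spos by (simp add: field_simps)
  finally have eq: "activity_score \<sigma> W j = real CARD('b) * c j / S" .
  show "\<tau> \<le> activity_score \<sigma> W j"
    unfolding eq using tS Spos by (simp add: pos_le_divide_eq)
qed

end
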